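(* Let $(\mathfrak{h},[\;,\;],\langle\;,\;\rangle_{\mathfrak{h}})$ be a Lorentzian nilpotent Lie algebra whose center $\mathrm{Z}(\mathfrak{h})$ is nondegenerate and positive definite, with $\mathfrak{g}$, $[\;,\;]_{\mathfrak{g}}$, $\langle\;,\;\rangle_{\mathfrak{g}}$, $\langle\;,\;\rangle_z$, $\omega$, $\omega_u$, $\omega_u^*$, $S_x$, $J_u$ as in the context. Then the Ricci curvature $\mathrm{ric}_{\mathfrak{h}}$ of $\mathfrak{h}$ satisfies $\mathrm{ric}_{\mathfrak{h}}(u,v)=\mathrm{ric}_{\mathfrak{g}}(u,v)-\tfrac12\mathrm{tr}(\omega_u^*\circ\omega_v)$ for $u,v\in\mathfrak{g}$, $\mathrm{ric}_{\mathfrak{h}}(x,y)=-\tfrac14\mathrm{tr}(S_x\circ S_y)$ for $x,y\in\mathrm{Z}(\mathfrak{h})$, $\mathrm{ric}_{\mathfrak{h}}(u,x)=-\tfrac14\mathrm{tr}(J_u\circ S_x)$ for $x\in\mathrm{Z}(\mathfrak{h})$, $u\in\mathfrak{g}$, where $\mathrm{ric}_{\mathfrak{g}}$ is the Ricci curvature of $(\mathfrak{g},[\;,\;]_{\mathfrak{g}},\langle\;,\;\rangle_{\mathfrak{g}})$.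
   Context: Setting: $\mathfrak{h}$ is a real finite-dimensional nilpotent Lie algebra with a Lorentzian inner product $\langle\;,\;\rangle_{\mathfrak{h}}$ (signature $(1,n-1)$) whose center $\mathrm{Z}(\mathfrak{h})$ is nondegenerate with positive definite restricted inner product $\langle\;,\;\rangle_z$. Put $\mathfrak{g}=\mathrm{Z}(\mathfrak{h})^\perp$ with restricted inner product $\langle\;,\;\rangle_{\mathfrak{g}}$. For $u,v\in\mathfrak{g}$ write $[u,v]=[u,v]_{\mathfrak{g}}+\omega(u,v)$ with $[u,v]_{\mathfrak{g}}\in\mathfrak{g}$, $\omega(u,v)\in\mathrm{Z}(\mathfrak{h})$; $(\mathfrak{g},[\;,\;]_{\mathfrak{g}})$ is a Lie algebra. For $u\in\mathfrak{g}$: $\omega_u:\mathfrak{g}\to\mathrm{Z}(\mathfrak{h})$, $v\mapsto\omega(u,v)$; $\omega_u^*:\mathrm{Z}(\mathfrak{h})\to\mathfrak{g}$ given by $\langle\omega_u^*(x),v\rangle_{\mathfrak{g}}=\langle\omega(u,v),x\rangle_z$; $\mathrm{ad}_u(v)=[u,v]_{\mathfrak{g}}$ with adjoint $\mathrm{ad}_u^*$ w.r.t. $\langle\;,\;\rangle_{\mathfrak{g}}$; $J_u:\mathfrak{g}\to\mathfrak{g}$, $J_u(v)=\mathrm{ad}_v^*(u)$. For $x\in\mathrm{Z}(\mathfrak{h})$, $S_x:\mathfrak{g}\to\mathfrak{g}$, $S_x(u)=\omega_u^*(x)$. Ricci curvature of a pseudo-Euclidean Lie algebra: Levi-Civita product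 $2\langle \mathrm{L}_uv,w\rangle=\langle[u,v],w\rangle+\langle[w,u],v\rangle+\langle[w,v],u\rangle$, curvature $K(u,v)=\mathrm{L}_{[u,v]}-[\mathrm{L}_u,\mathrm{L}_v]$, $\mathrm{ric}(u,v)=\mathrm{tr}(w\mapsto K(u,w)v)$. *)

theory Defs
  imports "HOL-Analysis.Analysis"
begin

(* The Euclidean inner product of 'a is used ONLY as an auxiliary device to compute traces
   (traces are basis independent); the pseudo-Euclidean metric is the separate form B. *)

definition onb :: "'a::euclidean_space set \<Rightarrow> 'a set \<Rightarrow> bool" where
  "onb V E \<longleftrightarrow> E \<subseteq> V \<and> pairwise orthogonal E \<and> (\<forall>e\<in>E. norm e = 1)
                \<and> independent E \<and> span E = V"

definition trace_on :: "'a::euclidean_space set \<Rightarrow> ('a \<Rightarrow> 'a) \<Rightarrow> real" where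
  "trace_on V f = (\<Sum>e\<in>(SOME E. onb V E). f e \<bullet> e)"

definition lie_algebra :: "('a::real_vector \<Rightarrow> 'a \<Rightarrow> 'a) \<Rightarrow> bool" where
  "lie_algebra br \<longleftrightarrow> bilinear br \<and> (\<forall>x. br x x = 0)
     \<and> (\<forall>x y z. br x (br y z) + br y (br z x) + br z (br x y) = 0)"

fun lcs :: "('a::real_vector \<Rightarrow> 'a \<Rightarrow> 'a) \<Rightarrow> nat \<Rightarrow> 'a set" where
  "lcs br 0 = UNIV"
| "lcs br (Suc k) = span {br x y | x y. y \<in> lcs br k}"

definition nilpotent_lie :: "('a::real_vector \<Rightarrow> 'a \<Rightarrow> 'a) \<Rightarrow> bool" where
  "nilpotent_lie br \<longleftrightarrow> (\<exists>k. lcs br k = {0})"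

definition lorentzian :: "('a::real_vector \<Rightarrow> 'a \<Rightarrow> real) \<Rightarrow> bool" where
  "lorentzian B \<longleftrightarrow> bilinear B \<and> (\<forall>x y. B x y = B y x) \<and>
     (\<exists>E. finite E \<and> independent E \<and> span E = UNIV \<and>
          (\<forall>e\<in>E. \<forall>f\<in>E. e \<noteq> f \<longrightarrow> B e f = 0) \<and>
          (\<exists>e0\<in>E. B e0 e0 = -1 \<and> (\<forall>e\<in>E - {e0}. B e e = 1)))"

definition center :: "('a::real_vector \<Rightarrow> 'a \<Rightarrow> 'a) \<Rightarrow> 'a set" where
  "center br = {x. \<forall>y. br x y = 0}"

definition orth_compl :: "('a \<Rightarrow> 'a \<Rightarrow> real) \<Rightarrow> 'a set \<Rightarrow> 'a set" where
  "orth_compl B V = {u. \<forall>x\<in>V. B u x = 0}"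

abbreviation gpart :: "('a::real_vector \<Rightarrow> 'a \<Rightarrow> 'a) \<Rightarrow> ('a \<Rightarrow> 'a \<Rightarrow> real) \<Rightarrow> 'a set" where
  "gpart br B \<equiv> orth_compl B (center br)"

definition omega :: "('a::real_vector \<Rightarrow> 'a \<Rightarrow> 'a) \<Rightarrow> ('a \<Rightarrow> 'a \<Rightarrow> real) \<Rightarrow> 'a \<Rightarrow> 'a \<Rightarrow> 'a" where
  "omega br B u v = (THE x. x \<in> center br \<and> br u v - x \<in> gpart br B)"

definition brg :: "('a::real_vector \<Rightarrow> 'a \<Rightarrow> 'a) \<Rightarrow> ('a \<Rightarrow> 'a \<Rightarrow> real) \<Rightarrow> 'a \<Rightarrow> 'a \<Rightarrow> 'a" where
  "brg br B u v = br u v - omega br B u v"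

definition adjoint_on :: "'a set \<Rightarrow> ('a \<Rightarrow> 'a \<Rightarrow> real) \<Rightarrow> ('a \<Rightarrow> 'a) \<Rightarrow> 'a \<Rightarrow> 'a" where
  "adjoint_on V B f y = (THE x. x \<in> V \<and> (\<forall>v\<in>V. B x v = B (f v) y))"

definition omega_star :: "('a::real_vector \<Rightarrow> 'a \<Rightarrow> 'a) \<Rightarrow> ('a \<Rightarrow> 'a \<Rightarrow> real) \<Rightarrow> 'a \<Rightarrow> 'a \<Rightarrow> 'a" where
  "omega_star br B u = adjoint_on (gpart br B) B (omega br B u)"

definition S_op :: "('a::real_vector \<Rightarrow> 'a \<Rightarrow> 'a) \<Rightarrow> ('a \<Rightarrow> 'a \<Rightarrow> real) \<Rightarrow> 'a \<Rightarrow> 'a \<Rightarrow> 'a" where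
  "S_op br B x u = omega_star br B u x"

definition ad_star :: "('a::real_vector \<Rightarrow> 'a \<Rightarrow> 'a) \<Rightarrow> ('a \<Rightarrow> 'a \<Rightarrow> real) \<Rightarrow> 'a \<Rightarrow> 'a \<Rightarrow> 'a" where
  "ad_star br B u = adjoint_on (gpart br B) B (brg br B u)"

definition J_op :: "('a::real_vector \<Rightarrow> 'a \<Rightarrow> 'a) \<Rightarrow> ('a \<Rightarrow> 'a \<Rightarrow> real) \<Rightarrow> 'a \<Rightarrow> 'a \<Rightarrow> 'a" where
  "J_op br B u v = ad_star br B v u"

definition LC :: "'a set \<Rightarrow> ('a::real_vector \<Rightarrow> 'a \<Rightarrow> 'a) \<Rightarrow> ('a \<Rightarrow> 'a \<Rightarrow> real) \<Rightarrow> 'a \<Rightarrow> 'a \<Rightarrow> 'a" where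
  "LC V br B u v = (THE z. z \<in> V \<and>
     (\<forall>w\<in>V. 2 * B z w = B (br u v) w + B (br w u) v + B (br w v) u))"

definition curv :: "'a set \<Rightarrow> ('a::real_vector \<Rightarrow> 'a \<Rightarrow> 'a) \<Rightarrow> ('a \<Rightarrow> 'a \<Rightarrow> real) \<Rightarrow> 'a \<Rightarrow> 'a \<Rightarrow> 'a \<Rightarrow> 'a" where
  "curv V br B u v w = LC V br B (br u v) w
      - (LC V br B u (LC V br B v w) - LC V br B v (LC V br B u w))"

definition ricci :: "'a::euclidean_space set \<Rightarrow> ('a \<Rightarrow> 'a \<Rightarrow> 'a) \<Rightarrow> ('a \<Rightarrow> 'a \<Rightarrow> real) \<Rightarrow> 'a \<Rightarrow> 'a \<Rightarrow> real" where
  "ricci V br B u v = trace_on V (\<lambda>w. curv V br B u w v)"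

end

theory Submission
  imports Defs
begin

lemma onb_some: assumes "subspace V" shows "onb V (SOME E. onb V E)"
proof -
  obtain E where "E \<subseteq> V" "pairwise orthogonal E" "\<And>x. x \<in> E \<Longrightarrow> norm x = 1"
      "independent E" "span E = V"
    using orthonormal_basis_subspace[OF assms] by metis
  then have "onb V E" by (auto simp: onb_def)
  then show ?thesis by (rule someI)
qed

lemma onb_finite: "onb V E \<Longrightarrow> finite E"
  by (simp add: onb_def finiteI_independent)

lemma onb_inner: assumes "onb V E" "e \<in> E" "e' \<in> E"
  shows "e \<bullet> e' = (if e = e' then 1 else 0)"
  using assms unfolding onb_def pairwise_def orthogonal_def
  by (auto simp: norm_eq_1)

lemma onb_expand: assumes "onb V E" "y \<in> V" shows "y = (\<Sum>e\<in>E. (y \<bullet> e) *\<^sub>R e)"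
proof -
  have fin: "finite E" using onb_finite[OF assms(1)] .
  define z where "z = y - (\<Sum>e\<in>E. (y \<bullet> e) *\<^sub>R e)"
  have zE: "z \<bullet> e' = 0" if "e' \<in> E" for e'
  proof -
    have "(\<Sum>e\<in>E. (y \<bullet> e) *\<^sub>R e) \<bullet> e' = (\<Sum>e\<in>E. (y \<bullet> e) * (e \<bullet> e'))"
      by (simp add: inner_sum_left)
    also have "\<dots> = (\<Sum>e\<in>E. if e = e' then y \<bullet> e' else 0)"
      by (rule sum.cong) (auto simp: onb_inner[OF assms(1) _ that])
    also have "\<dots> = y \<bullet> e'" using fin that by simp
    finally show ?thesis by (simp add: z_def inner_diff_left)
  qed
  have EV: "E \<subseteq> V" "span E = V" using assms(1) by (auto simp: onb_def)
  have "(\<Sum>e\<in>E. (y \<bullet> e) *\<^sub>R e) \<in> span E"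
    by (intro span_sum span_scale span_base)
  then have "z \<in> span E" unfolding z_def by (intro span_diff) (use assms(2) EV in auto)
  moreover have "x \<bullet> z = 0" if "x \<in> span E" for x
    using that
  proof (induction rule: span_induct)
    case base show ?case by (rule subspaceI) (auto simp: inner_add_left)
  next
    case (step x) then show ?case using zE by (simp add: inner_commute)
  qed
  ultimately have "z \<bullet> z = 0" by blast
  then show ?thesis by (simp add: z_def)
qed

lemma trace_on_cong: assumes "subspace V" "\<And>x. x \<in> V \<Longrightarrow> f x = g x"
  shows "trace_on V f = trace_on V g"
proof -
  have "(SOME E. onb V E) \<subseteq> V" using onb_some[OF assms(1)] by (simp add: onb_def)
  then show ?thesis unfolding trace_on_def using assms(2)
    by (intro sum.cong) auto
qed

lemma trace_on_add: "trace_on V (\<lambda>x. f x + g x) = trace_on V f + trace_on V g"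
  by (simp add: trace_on_def inner_add_left sum.distrib)
lemma trace_on_diff: "trace_on V (\<lambda>x. f x - g x) = trace_on V f - trace_on V g"
  by (simp add: trace_on_def inner_diff_left sum_subtractf)
lemma trace_on_scale: "trace_on V (\<lambda>x. c *\<^sub>R f x) = c * trace_on V f"
  by (simp add: trace_on_def sum_distrib_left)
lemma trace_on_zero: "trace_on V (\<lambda>x. 0) = 0"
  by (simp add: trace_on_def)

lemma trace_family:
  fixes b :: "'i \<Rightarrow> 'a::euclidean_space" and \<phi> :: "'i \<Rightarrow> 'a \<Rightarrow> real"
  assumes V: "subspace V" and I: "finite I"
    and rep: "\<And>y. y \<in> V \<Longrightarrow> y = (\<Sum>i\<in>I. \<phi> i y *\<^sub>R b i)"
    and bV: "\<And>i. i \<in> I \<Longrightarrow> b i \<in> V"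
    and lphi: "\<And>i. i \<in> I \<Longrightarrow> linear (\<phi> i)"
    and lf: "linear f" and fV: "\<And>x. x \<in> V \<Longrightarrow> f x \<in> V"
  shows "trace_on V f = (\<Sum>i\<in>I. \<phi> i (f (b i)))"
proof -
  define E where "E = (SOME E. onb V E)"
  have E: "onb V E" unfolding E_def by (rule onb_some[OF V])
  have EV: "e \<in> V" if "e \<in> E" for e using E that by (auto simp: onb_def)
  have "trace_on V f = (\<Sum>e\<in>E. f e \<bullet> e)" by (simp add: trace_on_def E_def)
  also have "\<dots> = (\<Sum>e\<in>E. \<Sum>i\<in>I. \<phi> i (f e) * (b i \<bullet> e))"
  proof (rule sum.cong[OF refl])
    fix e assume "e \<in> E"
    then have "f e = (\<Sum>i\<in>I. \<phi> i (f e) *\<^sub>R b i)" using rep fV EV by blast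
    then have "f e \<bullet> e = (\<Sum>i\<in>I. \<phi> i (f e) *\<^sub>R b i) \<bullet> e" by simp
    also have "\<dots> = (\<Sum>i\<in>I. \<phi> i (f e) * (b i \<bullet> e))" by (simp add: inner_sum_left)
    finally show "f e \<bullet> e = (\<Sum>i\<in>I. \<phi> i (f e) * (b i \<bullet> e))" .
  qed
  also have "\<dots> = (\<Sum>i\<in>I. \<Sum>e\<in>E. \<phi> i (f e) * (b i \<bullet> e))" by (rule sum.swap)
  also have "\<dots> = (\<Sum>i\<in>I. \<phi> i (f (b i)))"
  proof (rule sum.cong[OF refl])
    fix i assume i: "i \<in> I"
    have l: "linear (\<lambda>x. \<phi> i (f x))" using linear_compose[OF lf lphi[OF i]] by (simp add: o_def)
    have "\<phi> i (f (b i)) = \<phi> i (f (\<Sum>e\<in>E. (b i \<bullet> e) *\<^sub>R e))"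
      using onb_expand[OF E bV[OF i]] by simp
    also have "\<dots> = (\<Sum>e\<in>E. (b i \<bullet> e) * \<phi> i (f e))"
      by (simp add: linear_sum[OF l] linear_scale[OF l])
    finally show "(\<Sum>e\<in>E. \<phi> i (f e) * (b i \<bullet> e)) = \<phi> i (f (b i))"
      by (simp add: mult.commute)
  qed
  finally show ?thesis .
qed

lemma onb_sub: "onb V E \<Longrightarrow> E \<subseteq> V" by (simp add: onb_def)

lemma trace_on_zero_space: "trace_on {0} f = 0"
proof -
  have "(SOME E. onb {0} E) \<subseteq> ({0}::'a set)" by (rule onb_sub[OF onb_some]) (simp add: subspace_0)
  then show ?thesis unfolding trace_on_def by (intro sum.neutral) auto
qed

lemma trace_step:
  fixes f :: "'a::euclidean_space \<Rightarrow> 'a"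
  assumes W: "subspace W" and U: "subspace U" and WU: "W \<subseteq> U" and lf: "linear f"
    and fW: "\<And>x. x \<in> U \<Longrightarrow> f x \<in> W"
  shows "trace_on U f = trace_on W f"
proof -
  define W' where "W' = {y \<in> U. \<forall>w\<in>W. y \<bullet> w = 0}"
  have W': "subspace W'" unfolding W'_def using U
    by (auto simp: subspace_def inner_add_left)
  define E1 where "E1 = (SOME E. onb W E)"
  define E2 where "E2 = (SOME E. onb W' E)"
  have E1: "onb W E1" unfolding E1_def by (rule onb_some[OF W])
  have E2: "onb W' E2" unfolding E2_def by (rule onb_some[OF W'])
  have f1: "finite E1" "finite E2" using E1 E2 by (auto intro: onb_finite)
  have E1W: "E1 \<subseteq> W" "span E1 = W" using E1 by (auto simp: onb_def)
  have E2W: "E2 \<subseteq> W'" using E2 by (auto simp: onb_def)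
  have n1: "norm e = 1" if "e \<in> E1" for e using E1 that by (auto simp: onb_def)
  have disj: "E1 \<inter> E2 = {}"
  proof (rule ccontr)
    assume "E1 \<inter> E2 \<noteq> {}" then obtain e where e: "e \<in> E1" "e \<in> E2" by blast
    have "e \<in> W" "e \<in> W'" using e E1W E2W by auto
    then have "e \<bullet> e = 0" unfolding W'_def by simp
    then show False using n1[OF e(1)] by simp
  qed
  have "W' \<subseteq> U" unfolding W'_def by auto
  then have UU: "E1 \<union> E2 \<subseteq> U" using E1W E2W WU by auto
  have "trace_on U f = (\<Sum>e\<in>E1 \<union> E2. (\<lambda>y. y \<bullet> e) (f (id e)))"
  proof (rule trace_family[OF U])
    show "finite (E1 \<union> E2)" using f1 by simp
    show "id e \<in> U" if "e \<in> E1 \<union> E2" for e using UU that by auto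
    show "linear (\<lambda>y. y \<bullet> e)" for e by (rule linearI) (simp_all add: inner_add_left)
    show "linear f" by fact
    show "f x \<in> U" if "x \<in> U" for x using fW[OF that] WU by auto
    fix y assume y: "y \<in> U"
    obtain p q where p: "p \<in> span E1" and q: "\<And>w. w \<in> span E1 \<Longrightarrow> orthogonal q w"
      and yq: "y = p + q"
      using orthogonal_subspace_decomp_exists[of E1 y] by metis
    have pW: "p \<in> W" using p E1W by simp
    have "q = y - p" using yq by simp
    then have "q \<in> U" using subspace_diff[OF U y, of p] pW WU by auto
    moreover have "\<forall>w\<in>W. q \<bullet> w = 0" using q E1W(2) by (simp add: orthogonal_def)
    ultimately have qW': "q \<in> W'" unfolding W'_def by simp
    have s1: "(\<Sum>e\<in>E1. (y \<bullet> e) *\<^sub>R id e) = p"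
    proof -
      have "(\<Sum>e\<in>E1. (y \<bullet> e) *\<^sub>R id e) = (\<Sum>e\<in>E1. (p \<bullet> e) *\<^sub>R e)"
        using q E1W by (intro sum.cong) (auto simp: yq inner_add_left orthogonal_def span_base)
      also have "\<dots> = p" using onb_expand[OF E1 pW] by simp
      finally show ?thesis .
    qed
    have s2: "(\<Sum>e\<in>E2. (y \<bullet> e) *\<^sub>R id e) = q"
    proof -
      have "(\<Sum>e\<in>E2. (y \<bullet> e) *\<^sub>R id e) = (\<Sum>e\<in>E2. (q \<bullet> e) *\<^sub>R e)"
    proof (intro sum.cong refl)
      fix e assume "e \<in> E2"
      then have "e \<bullet> p = 0" using pW E2W unfolding W'_def by auto
      then show "(y \<bullet> e) *\<^sub>R id e = (q \<bullet> e) *\<^sub>R e" by (simp add: yq inner_add_left inner_add_right inner_commute)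
    qed
      also have "\<dots> = q" using onb_expand[OF E2 qW'] by simp
      finally show ?thesis .
    qed
    show "y = (\<Sum>e\<in>E1 \<union> E2. (y \<bullet> e) *\<^sub>R id e)"
      using s1 s2 yq by (simp add: sum.union_disjoint[OF f1 disj])
  qed
  also have "\<dots> = (\<Sum>e\<in>E1. f e \<bullet> e) + (\<Sum>e\<in>E2. f e \<bullet> e)"
    by (simp add: sum.union_disjoint[OF f1 disj])
  also have "(\<Sum>e\<in>E2. f e \<bullet> e) = 0"
    using E2W fW unfolding W'_def by (intro sum.neutral) (auto simp: inner_commute)
  finally show ?thesis by (simp add: trace_on_def E1_def)
qed

lemma trace_chain:
  fixes f :: "'a::euclidean_space \<Rightarrow> 'a"
  assumes sub: "\<And>j. subspace (V j)" and dec: "\<And>j. V (Suc j) \<subseteq> V j" and lf: "linear f"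
    and fV: "\<And>j x. x \<in> V j \<Longrightarrow> f x \<in> V (Suc j)" and k: "V k = {0}"
  shows "trace_on (V 0) f = 0"
proof -
  have st: "trace_on (V j) f = trace_on (V (Suc j)) f" for j
    by (rule trace_step[OF sub sub dec lf fV])
  have "trace_on (V 0) f = trace_on (V j) f" for j
  proof (induction j)
    case (Suc j)
    then show ?case using st[of j] by simp
  qed simp
  from this[of k] show ?thesis by (simp add: k trace_on_zero_space)
qed

locale LS =
  fixes br :: "'a::euclidean_space \<Rightarrow> 'a \<Rightarrow> 'a" and B :: "'a \<Rightarrow> 'a \<Rightarrow> real"
  assumes lie: "lie_algebra br" and nilp: "nilpotent_lie br" and lor: "lorentzian B"
    and posdef: "\<forall>x\<in>center br. x \<noteq> 0 \<longrightarrow> B x x > 0"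
begin

abbreviation "Z \<equiv> center br"
abbreviation "G \<equiv> gpart br B"

lemma bil_br: "bilinear br" using lie by (simp add: lie_algebra_def)
lemma bil_B: "bilinear B" using lor by (simp add: lorentzian_def)
lemma B_sym: "B x y = B y x" using lor by (simp add: lorentzian_def)
lemma br_self[simp]: "br x x = 0" using lie by (simp add: lie_algebra_def)

lemmas br_lin[simp] = bilinear_ladd[OF bil_br] bilinear_radd[OF bil_br] bilinear_lmul[OF bil_br]
  bilinear_rmul[OF bil_br] bilinear_lneg[OF bil_br] bilinear_rneg[OF bil_br]
  bilinear_lzero[OF bil_br] bilinear_rzero[OF bil_br] bilinear_lsub[OF bil_br] bilinear_rsub[OF bil_br]
lemmas B_lin[simp] = bilinear_ladd[OF bil_B] bilinear_radd[OF bil_B] bilinear_lmul[OF bil_B]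
  bilinear_rmul[OF bil_B] bilinear_lneg[OF bil_B] bilinear_rneg[OF bil_B]
  bilinear_lzero[OF bil_B] bilinear_rzero[OF bil_B] bilinear_lsub[OF bil_B] bilinear_rsub[OF bil_B]

lemma br_anti: "br y x = - br x y"
proof -
  have "br x y + br y x = br (x + y) (x + y)"
    by (simp only: bilinear_ladd[OF bil_br] bilinear_radd[OF bil_br]) (simp add: algebra_simps)
  then have "br x y + br y x = 0" by simp
  then show ?thesis by (metis add.commute eq_neg_iff_add_eq_0)
qed

lemma lin_B_left: "linear (\<lambda>x. B x y)" using bil_B by (simp add: bilinear_def)
lemma lin_B_right: "linear (\<lambda>y. B x y)" using bil_B by (simp add: bilinear_def)

lemma B_sum_left: "finite I \<Longrightarrow> B (\<Sum>i\<in>I. f i) y = (\<Sum>i\<in>I. B (f i) y)"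
  by (induction I rule: finite_induct) simp_all
lemma B_sum_right: "finite I \<Longrightarrow> B y (\<Sum>i\<in>I. f i) = (\<Sum>i\<in>I. B y (f i))"
  by (induction I rule: finite_induct) simp_all

lemma Z_mem: "z \<in> Z \<Longrightarrow> br z y = 0" by (simp add: center_def)
lemma Z_mem2: "z \<in> Z \<Longrightarrow> br y z = 0" using br_anti[of z y] by (simp add: center_def)

lemma sub_Z: "subspace Z"
  by (auto simp: subspace_def center_def)
lemma sub_G: "subspace G"
  by (auto simp: subspace_def orth_compl_def)

lemma GZ: "u \<in> G \<Longrightarrow> z \<in> Z \<Longrightarrow> B u z = 0" by (simp add: orth_compl_def)
lemma ZG: "u \<in> G \<Longrightarrow> z \<in> Z \<Longrightarrow> B z u = 0" using GZ B_sym by metis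

lemma riesz: assumes "linear l" shows "\<exists>r. \<forall>y. B r y = l y"
proof -
  obtain E where E: "finite E" "independent E" "span E = UNIV"
    "\<forall>e\<in>E. \<forall>f\<in>E. e \<noteq> f \<longrightarrow> B e f = 0"
    "\<forall>e\<in>E. B e e * B e e = 1"
  proof -
    from lor obtain E e0 where E: "finite E" "independent E" "span E = UNIV"
      "\<forall>e\<in>E. \<forall>f\<in>E. e \<noteq> f \<longrightarrow> B e f = 0" "e0 \<in> E" "B e0 e0 = -1" "\<forall>e\<in>E - {e0}. B e e = 1"
      unfolding lorentzian_def by blast
    have "\<forall>e\<in>E. B e e * B e e = 1"
    proof
      fix e assume "e \<in> E"
      then show "B e e * B e e = 1" using E(6,7) by (cases "e = e0") auto
    qed
    with E that show ?thesis by blast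
  qed
  define r where "r = (\<Sum>e\<in>E. (B e e * l e) *\<^sub>R e)"
  have "B r y = l y" for y
  proof (rule linear_eq_on[OF lin_B_right assms])
    show "y \<in> span E" using E by simp
    fix f assume f: "f \<in> E"
    have "B r f = (\<Sum>e\<in>E. B e e * l e * B e f)" unfolding r_def by (simp add: B_sum_left[OF E(1)])
    also have "\<dots> = (\<Sum>e\<in>E. if e = f then B f f * l f * B f f else 0)"
    proof (rule sum.cong[OF refl])
      fix e assume "e \<in> E" then show "B e e * l e * B e f = (if e = f then B f f * l f * B f f else 0)"
        using E(4) f by auto
    qed
    also have "\<dots> = B f f * B f f * l f" using E(1) f by simp
    also have "\<dots> = l f" using E(5) f by simp
    finally show "B r f = l f" .
  qed
  then show ?thesis by blast
qed

lemma nondeg: assumes "\<And>y. B a y = 0" shows "a = 0"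
proof -
  have "linear (\<lambda>y. a \<bullet> y)" by (rule linearI) (simp_all add: inner_add_right)
  then obtain r where r: "\<And>y. B r y = a \<bullet> y" using riesz by blast
  have "a \<bullet> a = B r a" by (simp add: r)
  also have "\<dots> = B a r" by (rule B_sym)
  also have "\<dots> = 0" by (rule assms)
  finally show ?thesis by simp
qed

lemma Z_unique: assumes "z1 \<in> Z" "z2 \<in> Z" "\<And>z. z \<in> Z \<Longrightarrow> B z1 z = B z2 z" shows "z1 = z2"
proof -
  have "z1 - z2 \<in> Z" using assms sub_Z by (simp add: subspace_diff)
  moreover have "B (z1 - z2) (z1 - z2) = 0" using assms(3)[OF \<open>z1 - z2 \<in> Z\<close>] by simp
  ultimately have "z1 - z2 = 0" using posdef by (metis less_irrefl)
  then show ?thesis by simp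
qed

end

lemma onb_coeff: assumes "onb V E" "d' \<in> E"
  shows "(\<Sum>d\<in>E. c d *\<^sub>R d) \<bullet> d' = c d'"
proof -
  have "(\<Sum>d\<in>E. c d *\<^sub>R d) \<bullet> d' = (\<Sum>d\<in>E. c d * (d \<bullet> d'))" by (simp add: inner_sum_left)
  also have "\<dots> = (\<Sum>d\<in>E. if d = d' then c d' else 0)"
    by (rule sum.cong[OF refl]) (simp add: onb_inner[OF assms(1) _ assms(2)])
  also have "\<dots> = c d'" using onb_finite[OF assms(1)] assms(2) by simp
  finally show ?thesis .
qed

lemma onb_span: "onb V E \<Longrightarrow> span E = V" by (simp add: onb_def)

context LS begin

lemma B_zero_on_Z: assumes "onb Z D" "\<And>d. d \<in> D \<Longrightarrow> B a d = B b d" "z \<in> Z"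
  shows "B a z = B b z"
proof (rule linear_eq_on[OF lin_B_right lin_B_right])
  show "z \<in> span D" using onb_span[OF assms(1)] assms(3) by simp
qed (use assms in auto)

lemma Q_ex: "\<exists>z\<in>Z. \<forall>z'\<in>Z. B z z' = B a z'"
proof -
  define D where "D = (SOME E. onb Z E)"
  have D: "onb Z D" unfolding D_def by (rule onb_some[OF sub_Z])
  have DZ: "D \<subseteq> Z" using onb_sub[OF D] .
  have fD: "finite D" using onb_finite[OF D] .
  define T where "T z = (\<Sum>d\<in>D. B z d *\<^sub>R d)" for z
  have lT: "linear T" unfolding T_def
    by (rule linearI) (simp_all add: scaleR_add_left sum.distrib scaleR_sum_right)
  have TZ: "T z \<in> Z" for z unfolding T_def using DZ sub_Z
    by (intro subspace_sum subspace_scale) (auto simp: subspace_def)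
  have Tc: "T z \<bullet> d' = B z d'" if "d' \<in> D" for z d'
    unfolding T_def by (rule onb_coeff[OF D that])
  have inj: "inj_on T Z"
  proof (rule inj_onI)
    fix z1 z2 assume z: "z1 \<in> Z" "z2 \<in> Z" "T z1 = T z2"
    define z where "z = z1 - z2"
    have zZ: "z \<in> Z" unfolding z_def using z sub_Z by (simp add: subspace_diff)
    have "B z d = B 0 d" if "d \<in> D" for d
      using Tc[OF that, of z1] Tc[OF that, of z2] z(3) by (simp add: z_def)
    then have "B z z = B 0 z" using B_zero_on_Z[OF D _ zZ] by blast
    then have "z = 0" using posdef zZ by (metis less_irrefl B_lin(7))
    then show "z1 = z2" by (simp add: z_def)
  qed
  have "dim (T ` Z) = dim Z" using dim_image_eq[OF lT, of Z] inj span_eq_iff[THEN iffD2, OF sub_Z] by simp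
  then have TZ_eq: "T ` Z = Z"
    using subspace_dim_equal[of "T ` Z" Z] linear_subspace_image[OF lT sub_Z] sub_Z TZ by auto
  define y where "y = (\<Sum>d\<in>D. B a d *\<^sub>R d)"
  have "y \<in> Z" unfolding y_def using DZ sub_Z
    by (intro subspace_sum subspace_scale) (auto simp: subspace_def)
  then obtain z where z: "z \<in> Z" "T z = y" using TZ_eq by (metis imageE)
  have "B z d = B a d" if "d \<in> D" for d
    using Tc[OF that, of z] onb_coeff[OF D that, of "\<lambda>d. B a d"] z(2) by (simp add: y_def)
  then have "\<forall>z'\<in>Z. B z z' = B a z'" using B_zero_on_Z[OF D] by blast
  then show ?thesis using z(1) by blast
qed

end

context LS begin

definition Q where "Q a = (SOME z. z \<in> Z \<and> (\<forall>z'\<in>Z. B z z' = B a z'))"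
definition P where "P a = a - Q a"

lemma Q_in[simp]: "Q a \<in> Z" and Q_char: "z \<in> Z \<Longrightarrow> B (Q a) z = B a z"
proof -
  have "Q a \<in> Z \<and> (\<forall>z'\<in>Z. B (Q a) z' = B a z')"
    unfolding Q_def by (rule someI_ex) (use Q_ex in blast)
  then show "Q a \<in> Z" "z \<in> Z \<Longrightarrow> B (Q a) z = B a z" by auto
qed

lemma Q_Z: "z \<in> Z \<Longrightarrow> Q z = z"
  by (rule Z_unique) (auto simp: Q_char)

lemma P_in[simp]: "P a \<in> G"
  by (simp add: orth_compl_def P_def Q_char)

lemma Q_G: "u \<in> G \<Longrightarrow> Q u = 0"
  by (rule Z_unique) (auto simp: Q_char GZ sub_Z subspace_0)

lemma Q_add[simp]: "Q (a + b) = Q a + Q b"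
  by (rule Z_unique) (auto simp: Q_char sub_Z subspace_add)
lemma Q_scale[simp]: "Q (c *\<^sub>R a) = c *\<^sub>R Q a"
  by (rule Z_unique) (auto simp: Q_char sub_Z subspace_scale)
lemma lin_Q: "linear Q" by (rule linearI) simp_all
lemma Q_diff[simp]: "Q (a - b) = Q a - Q b" using linear_diff[OF lin_Q] .
lemma Q_neg[simp]: "Q (- a) = - Q a" using linear_neg[OF lin_Q] .
lemma Q_zero[simp]: "Q 0 = 0" using linear_0[OF lin_Q] .

lemma P_add[simp]: "P (a + b) = P a + P b" by (simp add: P_def algebra_simps)
lemma P_scale[simp]: "P (c *\<^sub>R a) = c *\<^sub>R P a" by (simp add: P_def algebra_simps)
lemma lin_P: "linear P" by (rule linearI) simp_all
lemma P_diff[simp]: "P (a - b) = P a - P b" using linear_diff[OF lin_P] .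
lemma P_neg[simp]: "P (- a) = - P a" using linear_neg[OF lin_P] .
lemma P_zero[simp]: "P 0 = 0" using linear_0[OF lin_P] .

lemma P_G: "u \<in> G \<Longrightarrow> P u = u" by (simp add: P_def Q_G)
lemma P_Z: "z \<in> Z \<Longrightarrow> P z = 0" by (simp add: P_def Q_Z)
lemma PQ: "P a + Q a = a" by (simp add: P_def)
lemma PP[simp]: "P (P a) = P a" by (simp add: P_G)
lemma QQ[simp]: "Q (Q a) = Q a" by (simp add: Q_Z)
lemma PQ0[simp]: "P (Q a) = 0" by (simp add: P_Z)
lemma QP0[simp]: "Q (P a) = 0" by (simp add: Q_G)

lemma GZ0: "x \<in> G \<Longrightarrow> x \<in> Z \<Longrightarrow> x = 0"
  using GZ[of x x] posdef by (metis less_irrefl)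

lemma G_unique: assumes "a \<in> G" "b \<in> G" "\<And>p. p \<in> G \<Longrightarrow> B a p = B b p" shows "a = b"
proof -
  define d where "d = a - b"
  have dG: "d \<in> G" unfolding d_def using assms sub_G by (simp add: subspace_diff)
  have "B d y = 0" for y
  proof -
    have "B d y = B d (P y) + B d (Q y)" using PQ[of y] by (metis B_lin(2))
    also have "B d (P y) = 0" using assms(3)[of "P y"] by (simp add: d_def)
    also have "B d (Q y) = 0" using GZ[OF dG] by simp
    finally show ?thesis by simp
  qed
  then have "d = 0" by (rule nondeg)
  then show ?thesis by (simp add: d_def)
qed

definition Rg where "Rg l = P (SOME r. \<forall>y. B r y = l y)"

lemma Rg_in[simp]: "Rg l \<in> G" by (simp add: Rg_def)
lemma Rg_char: assumes "linear l" "p \<in> G" shows "B (Rg l) p = l p"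
proof -
  define r where "r = (SOME r. \<forall>y. B r y = l y)"
  have r: "\<forall>y. B r y = l y" unfolding r_def by (rule someI_ex) (rule riesz[OF assms(1)])
  have "B (Rg l) p = B r p - B (Q r) p" by (simp add: Rg_def r_def[symmetric] P_def)
  also have "B (Q r) p = 0" using ZG[OF assms(2)] by simp
  finally show ?thesis using r by simp
qed

lemma Rg_char': assumes "linear l" "p \<in> G" shows "B p (Rg l) = l p"
  using Rg_char[OF assms] B_sym by metis

end

context LS begin

lemma br_P: "br a b = br (P a) (P b)"
proof -
  have "br a b = br (P a + Q a) (P b + Q b)" by (simp only: PQ)
  also have "\<dots> = br (P a) (P b)" by (simp add: Z_mem Z_mem2)
  finally show ?thesis .
qed

lemma omega_eq: "omega br B = (\<lambda>u v. Q (br u v))"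
proof (intro ext)
  fix u v
  show "omega br B u v = Q (br u v)" unfolding omega_def
  proof (rule the_equality)
    show "Q (br u v) \<in> Z \<and> br u v - Q (br u v) \<in> G" using P_in[of "br u v"] by (simp add: P_def)
    fix x assume x: "x \<in> Z \<and> br u v - x \<in> G"
    have "x - Q (br u v) = P (br u v) - (br u v - x)" by (simp add: P_def)
    also have "\<dots> \<in> G" using x sub_G by (simp add: subspace_diff)
    finally have "x - Q (br u v) \<in> G" .
    moreover have "x - Q (br u v) \<in> Z" using x sub_Z by (simp add: subspace_diff)
    ultimately show "x = Q (br u v)" using GZ0 by fastforce
  qed
qed

lemma brg_eq: "brg br B = (\<lambda>u v. P (br u v))"
  by (intro ext) (simp add: brg_def omega_eq P_def)

lemma adjoint_eq: assumes "linear f"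
  shows "adjoint_on G B f y = Rg (\<lambda>p. B (f p) y)"
proof -
  have l: "linear (\<lambda>p. B (f p) y)"
    using linear_compose[OF assms lin_B_left] by (simp add: o_def)
  show ?thesis unfolding adjoint_on_def
  proof (rule the_equality)
    show "Rg (\<lambda>p. B (f p) y) \<in> G \<and> (\<forall>v\<in>G. B (Rg (\<lambda>p. B (f p) y)) v = B (f v) y)"
      using Rg_char[OF l] by simp
    fix x assume x: "x \<in> G \<and> (\<forall>v\<in>G. B x v = B (f v) y)"
    show "x = Rg (\<lambda>p. B (f p) y)"
      by (rule G_unique) (use x Rg_char[OF l] in auto)
  qed
qed

definition S where "S x u = Rg (\<lambda>p. B (Q (br u p)) x)"
lemma S_lin0: "linear (\<lambda>p. B (Q (br u p)) x)" by (rule linearI) simp_all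
lemma S_in[simp]: "S x u \<in> G" by (simp add: S_def)
lemma S_char: "p \<in> G \<Longrightarrow> B (S x u) p = B (Q (br u p)) x"
  unfolding S_def by (rule Rg_char[OF S_lin0])

lemma S_eq: "S_op br B x u = S x u"
proof -
  have l: "linear (\<lambda>v. Q (br u v))" by (rule linearI) simp_all
  show ?thesis by (simp add: S_op_def omega_star_def omega_eq adjoint_eq[OF l] S_def)
qed

lemma S_add1[simp]: "S (x + y) u = S x u + S y u"
  by (rule G_unique) (auto simp: S_char sub_G subspace_add)
lemma S_add2[simp]: "S x (u + v) = S x u + S x v"
  by (rule G_unique) (auto simp: S_char sub_G subspace_add)
lemma S_scale1[simp]: "S (c *\<^sub>R x) u = c *\<^sub>R S x u"
  by (rule G_unique) (auto simp: S_char sub_G subspace_scale)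
lemma S_scale2[simp]: "S x (c *\<^sub>R u) = c *\<^sub>R S x u"
  by (rule G_unique) (auto simp: S_char sub_G subspace_scale)
lemma S_lin1: "linear (\<lambda>x. S x u)" by (rule linearI) simp_all
lemma S_lin2: "linear (\<lambda>u. S x u)" by (rule linearI) simp_all
lemma S_diff1[simp]: "S (x - y) u = S x u - S y u" using linear_diff[OF S_lin1] .
lemma S_diff2[simp]: "S x (u - v) = S x u - S x v" using linear_diff[OF S_lin2] .
lemma S_neg1[simp]: "S (- x) u = - S x u" using linear_neg[OF S_lin1] .
lemma S_neg2[simp]: "S x (- u) = - S x u" using linear_neg[OF S_lin2] .
lemma S_zero1[simp]: "S 0 u = 0" using linear_0[OF S_lin1] .
lemma S_zero2[simp]: "S x 0 = 0" using linear_0[OF S_lin2] .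
lemma PS[simp]: "P (S x u) = S x u" by (simp add: P_G)
lemma QS[simp]: "Q (S x u) = 0" by (simp add: Q_G)

definition J where "J u v = Rg (\<lambda>p. B (P (br v p)) u)"
lemma J_lin0: "linear (\<lambda>p. B (P (br v p)) u)" by (rule linearI) simp_all
lemma J_char: "p \<in> G \<Longrightarrow> B (J u v) p = B (P (br v p)) u"
  unfolding J_def by (rule Rg_char[OF J_lin0])
lemma J_in[simp]: "J u v \<in> G" by (simp add: J_def)
lemma J_eq: "J_op br B u v = J u v"
proof -
  have l: "linear (\<lambda>p. P (br v p))" by (rule linearI) simp_all
  show ?thesis by (simp add: J_op_def ad_star_def brg_eq adjoint_eq[OF l] J_def)
qed

end

context LS begin

definition Lg where
  "Lg u v = Rg (\<lambda>w. (1/2) * (B (P (br u v)) w + B (P (br w u)) v + B (P (br w v)) u))"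
lemma Lg_lin0: "linear (\<lambda>w. (1/2) * (B (P (br u v)) w + B (P (br w u)) v + B (P (br w v)) u))"
  by (rule linearI) (simp_all add: algebra_simps)
lemma Lg_in[simp]: "Lg u v \<in> G" by (simp add: Lg_def)
lemma Lg_char: "w \<in> G \<Longrightarrow> B (Lg u v) w = (1/2) * (B (P (br u v)) w + B (P (br w u)) v + B (P (br w v)) u)"
  unfolding Lg_def by (rule Rg_char[OF Lg_lin0])

lemma LCG_eq: "LC G (brg br B) B = Lg"
proof (intro ext)
  fix u v
  show "LC G (brg br B) B u v = Lg u v" unfolding LC_def brg_eq
  proof (rule the_equality)
    show "Lg u v \<in> G \<and> (\<forall>w\<in>G. 2 * B (Lg u v) w = B (P (br u v)) w + B (P (br w u)) v + B (P (br w v)) u)"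
      by (simp add: Lg_char)
    fix z assume z: "z \<in> G \<and> (\<forall>w\<in>G. 2 * B z w = B (P (br u v)) w + B (P (br w u)) v + B (P (br w v)) u)"
    show "z = Lg u v"
      by (rule G_unique) (use z in \<open>auto simp: Lg_char\<close>)
  qed
qed

lemma Lg_add1[simp]: "Lg (a + b) c = Lg a c + Lg b c"
  by (rule G_unique) (auto simp: Lg_char sub_G subspace_add algebra_simps)
lemma Lg_add2[simp]: "Lg c (a + b) = Lg c a + Lg c b"
  by (rule G_unique) (auto simp: Lg_char sub_G subspace_add algebra_simps)
lemma Lg_scale1[simp]: "Lg (r *\<^sub>R a) c = r *\<^sub>R Lg a c"
  by (rule G_unique) (auto simp: Lg_char sub_G subspace_scale algebra_simps)
lemma Lg_scale2[simp]: "Lg c (r *\<^sub>R a) = r *\<^sub>R Lg c a"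
  by (rule G_unique) (auto simp: Lg_char sub_G subspace_scale algebra_simps)
lemma Lg_lin1: "linear (\<lambda>x. Lg x u)" by (rule linearI) simp_all
lemma Lg_lin2: "linear (\<lambda>u. Lg x u)" by (rule linearI) simp_all
lemma Lg_diff1[simp]: "Lg (x - y) u = Lg x u - Lg y u" using linear_diff[OF Lg_lin1] .
lemma Lg_diff2[simp]: "Lg x (u - v) = Lg x u - Lg x v" using linear_diff[OF Lg_lin2] .
lemma Lg_neg1[simp]: "Lg (- x) u = - Lg x u" using linear_neg[OF Lg_lin1] .
lemma Lg_neg2[simp]: "Lg x (- u) = - Lg x u" using linear_neg[OF Lg_lin2] .
lemma Lg_zero1[simp]: "Lg 0 u = 0" using linear_0[OF Lg_lin1] .
lemma Lg_zero2[simp]: "Lg x 0 = 0" using linear_0[OF Lg_lin2] .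
lemma PLg[simp]: "P (Lg x u) = Lg x u" by (simp add: P_G)
lemma QLg[simp]: "Q (Lg x u) = 0" by (simp add: Q_G)

definition Lh where
  "Lh a b = Lg (P a) (P b) + (1/2) *\<^sub>R Q (br (P a) (P b)) - (1/2) *\<^sub>R S (Q b) (P a)
     - (1/2) *\<^sub>R S (Q a) (P b)"

lemma B_dec_right: "B c d = B c (P d) + B c (Q d)"
  using PQ[of d] by (metis B_lin(2))
lemma B_dec_left: "B c d = B (P c) d + B (Q c) d"
  using PQ[of c] by (metis B_lin(1))

lemma Lh_char: "2 * B (Lh a b) w = B (br a b) w + B (br w a) b + B (br w b) a"
proof -
  define u v x y p q where "u = P a" "v = P b" "x = Q a" "y = Q b" "p = P w" "q = Q w"
  have mem: "u \<in> G" "v \<in> G" "p \<in> G" "x \<in> Z" "y \<in> Z" "q \<in> Z"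
    by (simp_all add: u_v_x_y_p_q_def)
  have B1: "B (br a b) w = B (P (br u v)) p + B (Q (br u v)) q"
  proof -
    have "B (br a b) w = B (P (br u v) + Q (br u v)) (p + q)"
      by (simp only: PQ u_v_x_y_p_q_def br_P[of a b])
    also have "\<dots> = B (P (br u v)) p + B (Q (br u v)) q"
      using mem by (simp add: GZ ZG)
    finally show ?thesis .
  qed
  have B2: "B (br w a) b = B (P (br p u)) v + B (Q (br p u)) y"
  proof -
    have "B (br w a) b = B (P (br p u) + Q (br p u)) (v + y)"
      by (simp only: PQ u_v_x_y_p_q_def br_P[of w a])
    also have "\<dots> = B (P (br p u)) v + B (Q (br p u)) y"
      using mem by (simp add: GZ ZG)
    finally show ?thesis .
  qed
  have B3: "B (br w b) a = B (P (br p v)) u + B (Q (br p v)) x"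
  proof -
    have "B (br w b) a = B (P (br p v) + Q (br p v)) (u + x)"
      by (simp only: PQ u_v_x_y_p_q_def br_P[of w b])
    also have "\<dots> = B (P (br p v)) u + B (Q (br p v)) x"
      using mem by (simp add: GZ ZG)
    finally show ?thesis .
  qed
  have L: "B (Lh a b) w = B (Lg u v) p + 1/2 * B (Q (br u v)) q - 1/2 * B (S y u) p - 1/2 * B (S x v) p"
  proof -
    have "B (Lh a b) w = B (Lh a b) (p + q)" by (simp only: PQ u_v_x_y_p_q_def)
    also have "\<dots> = B (Lg u v) p + 1/2 * B (Q (br u v)) q - 1/2 * B (S y u) p - 1/2 * B (S x v) p"
      using mem by (simp add: Lh_def u_v_x_y_p_q_def[symmetric] GZ ZG)
    finally show ?thesis .
  qed
  have C1: "B (Lg u v) p = 1/2 * (B (P (br u v)) p + B (P (br p u)) v + B (P (br p v)) u)"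
    using Lg_char[OF mem(3)] .
  have C2: "B (S y u) p = - B (Q (br p u)) y"
    using S_char[OF mem(3), of y u] br_anti[of p u] by simp
  have C3: "B (S x v) p = - B (Q (br p v)) x"
    using S_char[OF mem(3), of x v] br_anti[of p v] by simp
  show ?thesis using B1 B2 B3 L C1 C2 C3 by simp
qed

lemma LCU_eq: "LC UNIV br B = Lh"
proof (intro ext)
  fix a b
  show "LC UNIV br B a b = Lh a b" unfolding LC_def
  proof (rule the_equality)
    show "Lh a b \<in> UNIV \<and> (\<forall>w\<in>UNIV. 2 * B (Lh a b) w = B (br a b) w + B (br w a) b + B (br w b) a)"
      by (simp add: Lh_char)
    fix z assume z: "z \<in> UNIV \<and> (\<forall>w\<in>UNIV. 2 * B z w = B (br a b) w + B (br w a) b + B (br w b) a)"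
    have "B (z - Lh a b) w = 0" for w
    proof -
      have "2 * B z w = 2 * B (Lh a b) w" using z Lh_char[of a b w] by simp
      then show ?thesis by simp
    qed
    then have "z - Lh a b = 0" by (rule nondeg)
    then show "z = Lh a b" by simp
  qed
qed

end

context LS begin

lemma split_trace: assumes lf: "linear f"
  shows "trace_on UNIV f = trace_on G (\<lambda>w. P (f w)) + trace_on Z (\<lambda>w. Q (f w))"
proof -
  define EG where "EG = (SOME E. onb G E)"
  define EZ where "EZ = (SOME E. onb Z E)"
  have EG: "onb G EG" unfolding EG_def by (rule onb_some[OF sub_G])
  have EZ: "onb Z EZ" unfolding EZ_def by (rule onb_some[OF sub_Z])
  have fin: "finite EG" "finite EZ" using EG EZ by (auto intro: onb_finite)
  have disj: "EG \<inter> EZ = {}"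
  proof (rule ccontr)
    assume "EG \<inter> EZ \<noteq> {}" then obtain e where e: "e \<in> EG" "e \<in> EZ" by blast
    then have "e \<in> G" "e \<in> Z" using onb_sub[OF EG] onb_sub[OF EZ] by auto
    then have "e = 0" by (rule GZ0)
    moreover have "norm e = 1" using EG e(1) by (auto simp: onb_def)
    ultimately show False by simp
  qed
  define \<phi> where "\<phi> e y = (if e \<in> EG then P y \<bullet> e else Q y \<bullet> e)" for e y
  have "trace_on UNIV f = (\<Sum>e\<in>EG \<union> EZ. \<phi> e (f (id e)))"
  proof (rule trace_family[OF subspace_UNIV])
    show "finite (EG \<union> EZ)" using fin by simp
    show "id e \<in> UNIV" for e by simp
    show "linear (\<phi> e)" for e unfolding \<phi>_def
      by (rule linearI) (auto simp: inner_add_left)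
    show "linear f" by fact
    show "f x \<in> UNIV" for x by simp
    fix y :: 'a
    have "(\<Sum>e\<in>EG \<union> EZ. \<phi> e y *\<^sub>R id e) = (\<Sum>e\<in>EG. \<phi> e y *\<^sub>R e) + (\<Sum>e\<in>EZ. \<phi> e y *\<^sub>R e)"
      by (simp add: sum.union_disjoint[OF fin disj])
    also have "(\<Sum>e\<in>EG. \<phi> e y *\<^sub>R e) = (\<Sum>e\<in>EG. (P y \<bullet> e) *\<^sub>R e)"
      by (rule sum.cong) (auto simp: \<phi>_def)
    also have "\<dots> = P y" using onb_expand[OF EG P_in[of y]] by simp
    also have "(\<Sum>e\<in>EZ. \<phi> e y *\<^sub>R e) = (\<Sum>e\<in>EZ. (Q y \<bullet> e) *\<^sub>R e)"
      using disj by (intro sum.cong) (auto simp: \<phi>_def)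
    also have "\<dots> = Q y" using onb_expand[OF EZ Q_in[of y]] by simp
    finally show "y = (\<Sum>e\<in>EG \<union> EZ. \<phi> e y *\<^sub>R id e)" by (simp add: PQ)
  qed
  also have "\<dots> = (\<Sum>e\<in>EG. P (f e) \<bullet> e) + (\<Sum>e\<in>EZ. Q (f e) \<bullet> e)"
  proof -
    have "(\<Sum>e\<in>EZ. \<phi> e (f (id e))) = (\<Sum>e\<in>EZ. Q (f e) \<bullet> e)"
      using disj by (intro sum.cong) (auto simp: \<phi>_def)
    moreover have "(\<Sum>e\<in>EG. \<phi> e (f (id e))) = (\<Sum>e\<in>EG. P (f e) \<bullet> e)"
      by (intro sum.cong) (auto simp: \<phi>_def)
    ultimately show ?thesis by (simp add: sum.union_disjoint[OF fin disj])
  qed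
  also have "\<dots> = trace_on G (\<lambda>w. P (f w)) + trace_on Z (\<lambda>w. Q (f w))"
    by (simp add: trace_on_def EG_def EZ_def)
  finally show ?thesis .
qed

lemma lcs_sub: "subspace (lcs br j)"
  by (cases j) (simp_all add: subspace_UNIV subspace_span)

lemma lcs_dec: "lcs br (Suc j) \<subseteq> lcs br j"
proof (induction j)
  case 0 then show ?case by simp
next
  case (Suc j)
  have "{br x y |x y. y \<in> lcs br (Suc j)} \<subseteq> {br x y |x y. y \<in> lcs br j}" using Suc by blast
  then show ?case by (simp only: lcs.simps) (rule span_mono)
qed

lemma trace_ad_zero: "trace_on UNIV (\<lambda>w. br c w) = 0"
proof -
  obtain k where k: "lcs br k = {0}" using nilp by (auto simp: nilpotent_lie_def)
  have l: "linear (\<lambda>w. br c w)" by (rule linearI) simp_all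
  have "trace_on (lcs br 0) (\<lambda>w. br c w) = 0"
  proof (rule trace_chain[OF lcs_sub lcs_dec l _ k])
    fix j x assume "x \<in> lcs br j"
    then show "br c x \<in> lcs br (Suc j)" by (auto intro: span_base)
  qed
  then show ?thesis by simp
qed

lemma trace_adg_zero: "trace_on G (\<lambda>w. P (br w c)) = 0"
proof -
  have l: "linear (\<lambda>w. br w c)" by (rule linearI) simp_all
  have "trace_on UNIV (\<lambda>w. br w c) = trace_on UNIV (\<lambda>w. (-1) *\<^sub>R br c w)"
    by (simp add: br_anti[of c])
  also have "\<dots> = 0" by (simp only: trace_on_scale trace_ad_zero)
  finally have "trace_on G (\<lambda>w. P (br w c)) + trace_on Z (\<lambda>w. Q (br w c)) = 0"
    using split_trace[OF l] by simp
  moreover have "trace_on Z (\<lambda>w. Q (br w c)) = trace_on Z (\<lambda>w. 0)"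
    by (rule trace_on_cong[OF sub_Z]) (simp add: Z_mem)
  ultimately show ?thesis by (simp add: trace_on_zero)
qed

end

lemma bilinI:
  fixes f :: "'a::real_vector \<Rightarrow> 'a \<Rightarrow> real"
  assumes "\<And>x y z. f (x + y) z = f x z + f y z" "\<And>x y z. f x (y + z) = f x y + f x z"
    "\<And>c x y. f (c *\<^sub>R x) y = c * f x y" "\<And>c x y. f x (c *\<^sub>R y) = c * f x y"
  shows "bilinear f"
  unfolding bilinear_def by (intro allI conjI linearI) (simp_all add: assms)

context LS begin

definition EG where "EG = (SOME E. onb G E)"
definition EZ where "EZ = (SOME E. onb Z E)"
lemma EG: "onb G EG" unfolding EG_def by (rule onb_some[OF sub_G])
lemma EZ: "onb Z EZ" unfolding EZ_def by (rule onb_some[OF sub_Z])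
lemma finEG: "finite EG" using onb_finite[OF EG] .
lemma finEZ: "finite EZ" using onb_finite[OF EZ] .
lemma EG_G: "e \<in> EG \<Longrightarrow> e \<in> G" using onb_sub[OF EG] by auto
lemma EZ_Z: "e \<in> EZ \<Longrightarrow> e \<in> Z" using onb_sub[OF EZ] by auto

definition rG where "rG e = Rg (\<lambda>y. y \<bullet> e)"
lemma rG_in[simp]: "rG e \<in> G" by (simp add: rG_def)
lemma rG_char: "y \<in> G \<Longrightarrow> B y (rG e) = y \<bullet> e"
  unfolding rG_def by (rule Rg_char') (rule linearI, simp_all add: inner_add_left)

definition rZ where "rZ e = Q (SOME r. \<forall>y. B r y = y \<bullet> e)"
lemma rZ_in[simp]: "rZ e \<in> Z" by (simp add: rZ_def)
lemma rZ_char: "y \<in> Z \<Longrightarrow> B y (rZ e) = y \<bullet> e"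
proof -
  assume y: "y \<in> Z"
  have l: "linear (\<lambda>y. y \<bullet> e)" by (rule linearI) (simp_all add: inner_add_left)
  define r where "r = (SOME r. \<forall>y. B r y = y \<bullet> e)"
  have r: "\<forall>y. B r y = y \<bullet> e" unfolding r_def by (rule someI_ex) (rule riesz[OF l])
  have "B y (rZ e) = B (Q r) y" by (simp add: rZ_def r_def[symmetric] B_sym[of y])
  also have "\<dots> = y \<bullet> e" using Q_char[OF y] r by simp
  finally show ?thesis .
qed

lemma trG: assumes "\<And>x. x \<in> G \<Longrightarrow> f x \<in> G"
  shows "trace_on G f = (\<Sum>e\<in>EG. B (f e) (rG e))"
  unfolding trace_on_def EG_def[symmetric] using assms
  by (intro sum.cong) (auto simp: rG_char EG_G)

lemma trZ: assumes "\<And>x. x \<in> Z \<Longrightarrow> f x \<in> Z"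
  shows "trace_on Z f = (\<Sum>e\<in>EZ. B (f e) (rZ e))"
  unfolding trace_on_def EZ_def[symmetric] using assms
  by (intro sum.cong) (auto simp: rZ_char EZ_Z)

lemma expG: "y \<in> G \<Longrightarrow> y = (\<Sum>e\<in>EG. B y (rG e) *\<^sub>R e)"
  using onb_expand[OF EG] by (simp add: rG_char)
lemma expZ: "y \<in> Z \<Longrightarrow> y = (\<Sum>e\<in>EZ. B y (rZ e) *\<^sub>R e)"
  using onb_expand[OF EZ] by (simp add: rZ_char)

lemma bil_sum_left: fixes \<beta> :: "'a \<Rightarrow> 'a \<Rightarrow> real" assumes "bilinear \<beta>" "finite I"
  shows "\<beta> (\<Sum>i\<in>I. c i *\<^sub>R x i) y = (\<Sum>i\<in>I. c i * \<beta> (x i) y)"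
  using assms(2) by (induction I rule: finite_induct)
    (simp_all add: bilinear_ladd[OF assms(1)] bilinear_lmul[OF assms(1)] bilinear_lzero[OF assms(1)])
lemma bil_sum_right: fixes \<beta> :: "'a \<Rightarrow> 'a \<Rightarrow> real" assumes "bilinear \<beta>" "finite I"
  shows "\<beta> y (\<Sum>i\<in>I. c i *\<^sub>R x i) = (\<Sum>i\<in>I. c i * \<beta> y (x i))"
  using assms(2) by (induction I rule: finite_induct)
    (simp_all add: bilinear_radd[OF assms(1)] bilinear_rmul[OF assms(1)] bilinear_rzero[OF assms(1)])

lemma symG: fixes \<beta> :: "'a \<Rightarrow> 'a \<Rightarrow> real" assumes bil: "bilinear \<beta>"
  shows "(\<Sum>e\<in>EG. \<beta> e (rG e)) = (\<Sum>e\<in>EG. \<beta> (rG e) e)"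
proof -
  have "(\<Sum>e\<in>EG. \<beta> e (rG e)) = (\<Sum>e\<in>EG. \<Sum>e'\<in>EG. B (rG e) (rG e') * \<beta> e e')"
  proof (rule sum.cong[OF refl])
    fix e
    have "\<beta> e (rG e) = \<beta> e (\<Sum>e'\<in>EG. B (rG e) (rG e') *\<^sub>R e')" using expG[of "rG e"] by simp
    also have "\<dots> = (\<Sum>e'\<in>EG. B (rG e) (rG e') * \<beta> e e')" by (rule bil_sum_right[OF bil finEG])
    finally show "\<beta> e (rG e) = (\<Sum>e'\<in>EG. B (rG e) (rG e') * \<beta> e e')" .
  qed
  also have "\<dots> = (\<Sum>e'\<in>EG. \<Sum>e\<in>EG. B (rG e) (rG e') * \<beta> e e')" by (rule sum.swap)
  also have "\<dots> = (\<Sum>e'\<in>EG. \<beta> (rG e') e')"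
  proof (rule sum.cong[OF refl])
    fix e'
    have "\<beta> (rG e') e' = \<beta> (\<Sum>e\<in>EG. B (rG e') (rG e) *\<^sub>R e) e'" using expG[of "rG e'"] by simp
    also have "\<dots> = (\<Sum>e\<in>EG. B (rG e') (rG e) * \<beta> e e')" by (rule bil_sum_left[OF bil finEG])
    also have "\<dots> = (\<Sum>e\<in>EG. B (rG e) (rG e') * \<beta> e e')" by (simp add: B_sym[of "rG e'"])
    finally show "(\<Sum>e\<in>EG. B (rG e) (rG e') * \<beta> e e') = \<beta> (rG e') e'" by simp
  qed
  finally show ?thesis .
qed

lemma antisymG: fixes \<beta> :: "'a \<Rightarrow> 'a \<Rightarrow> real" assumes bil: "bilinear \<beta>" and anti: "\<And>a b. \<beta> a b = - \<beta> b a"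
  shows "(\<Sum>e\<in>EG. \<beta> e (rG e)) = 0"
proof -
  have "(\<Sum>e\<in>EG. \<beta> e (rG e)) = (\<Sum>e\<in>EG. \<beta> (rG e) e)" by (rule symG[OF bil])
  also have "\<dots> = - (\<Sum>e\<in>EG. \<beta> e (rG e))" by (simp add: anti[of "rG _"] sum_negf)
  finally show ?thesis by linarith
qed

lemma cycG: assumes lA: "linear A" and lC: "linear C"
  and AG: "\<And>x. x \<in> G \<Longrightarrow> A x \<in> G" and CG: "\<And>x. x \<in> G \<Longrightarrow> C x \<in> G"
  shows "trace_on G (\<lambda>w. A (C w)) = trace_on G (\<lambda>w. C (A w))"
proof -
  have key: "B (A (C e)) (rG e) = (\<Sum>e'\<in>EG. B (C e) (rG e') * B (A e') (rG e))"
    if "e \<in> EG" "\<And>x. x \<in> G \<Longrightarrow> A x \<in> G" "\<And>x. x \<in> G \<Longrightarrow> C x \<in> G" "linear A" for A C e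
  proof -
    have "A (C e) = A (\<Sum>e'\<in>EG. B (C e) (rG e') *\<^sub>R e')"
      using expG[OF that(3)[OF EG_G[OF that(1)]]] by simp
    also have "\<dots> = (\<Sum>e'\<in>EG. B (C e) (rG e') *\<^sub>R A e')"
      by (simp add: linear_sum[OF that(4)] linear_scale[OF that(4)])
    finally show ?thesis by (simp add: B_sum_left[OF finEG])
  qed
  have "trace_on G (\<lambda>w. A (C w)) = (\<Sum>e\<in>EG. B (A (C e)) (rG e))"
    by (rule trG) (simp add: AG CG)
  also have "\<dots> = (\<Sum>e\<in>EG. \<Sum>e'\<in>EG. B (C e) (rG e') * B (A e') (rG e))"
    by (rule sum.cong[OF refl], rule key[where A=A and C=C]) (simp_all add: AG CG lA)
  also have "\<dots> = (\<Sum>e'\<in>EG. \<Sum>e\<in>EG. B (C e) (rG e') * B (A e') (rG e))" by (rule sum.swap)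
  also have "\<dots> = (\<Sum>e\<in>EG. B (C (A e)) (rG e))"
  proof (rule sum.cong[OF refl])
    fix e' assume "e' \<in> EG"
    have "B (C (A e')) (rG e') = (\<Sum>e\<in>EG. B (A e') (rG e) * B (C e) (rG e'))"
      by (rule key[where A=C and C=A]) (simp_all add: \<open>e' \<in> EG\<close> AG CG lC)
    then show "(\<Sum>e\<in>EG. B (C e) (rG e') * B (A e') (rG e)) = B (C (A e')) (rG e')"
      by (simp add: mult.commute)
  qed
  also have "\<dots> = trace_on G (\<lambda>w. C (A w))"
    by (rule trG[symmetric]) (simp add: AG CG)
  finally show ?thesis .
qed

end

context LS begin

lemma T_sym: "trace_on G (\<lambda>w. S (Q (br u w)) v) = trace_on G (\<lambda>w. S (Q (br v w)) u)"
proof -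
  define \<beta> where "\<beta> a b = B (Q (br u a)) (Q (br v b))" for a b
  have bil: "bilinear \<beta>" unfolding \<beta>_def by (rule bilinI) (simp_all add: algebra_simps)
  have "trace_on G (\<lambda>w. S (Q (br u w)) v) = (\<Sum>e\<in>EG. B (S (Q (br u e)) v) (rG e))"
    by (rule trG) simp
  also have "\<dots> = (\<Sum>e\<in>EG. \<beta> e (rG e))"
    by (rule sum.cong[OF refl]) (simp add: S_char \<beta>_def B_sym[of "Q (br v _)"])
  also have "\<dots> = (\<Sum>e\<in>EG. \<beta> (rG e) e)" by (rule symG[OF bil])
  also have "\<dots> = (\<Sum>e\<in>EG. B (S (Q (br v e)) u) (rG e))"
    by (rule sum.cong[OF refl]) (simp add: S_char \<beta>_def)
  also have "\<dots> = trace_on G (\<lambda>w. S (Q (br v w)) u)"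
    by (rule trG[symmetric]) simp
  finally show ?thesis .
qed

lemma T_zero: "trace_on G (\<lambda>w. S c w) = 0"
proof -
  define \<beta> where "\<beta> a b = B (Q (br a b)) c" for a b
  have bil: "bilinear \<beta>" unfolding \<beta>_def by (rule bilinI) (simp_all add: algebra_simps)
  have anti: "\<beta> a b = - \<beta> b a" for a b unfolding \<beta>_def by (simp add: br_anti[of a b])
  have "trace_on G (\<lambda>w. S c w) = (\<Sum>e\<in>EG. B (S c e) (rG e))"
    by (rule trG) simp
  also have "\<dots> = (\<Sum>e\<in>EG. \<beta> e (rG e))"
    by (rule sum.cong[OF refl]) (simp add: S_char \<beta>_def)
  also have "\<dots> = 0" by (rule antisymG[OF bil anti])
  finally show ?thesis .
qed

lemma T_cross: "trace_on Z (\<lambda>z. Q (br u (S z v))) = trace_on G (\<lambda>w. S (Q (br u w)) v)"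
proof -
  have "trace_on Z (\<lambda>z. Q (br u (S z v))) = (\<Sum>d\<in>EZ. B (Q (br u (S d v))) (rZ d))"
    by (rule trZ) simp
  also have "\<dots> = (\<Sum>d\<in>EZ. B (S (rZ d) u) (S d v))"
    by (rule sum.cong[OF refl]) (simp add: S_char)
  also have "\<dots> = (\<Sum>d\<in>EZ. \<Sum>e\<in>EG. B (Q (br v (rG e))) d * B (Q (br u e)) (rZ d))"
  proof (rule sum.cong[OF refl])
    fix d
    have "B (S (rZ d) u) (S d v) = B (S (rZ d) u) (\<Sum>e\<in>EG. B (S d v) (rG e) *\<^sub>R e)"
      using expG[OF S_in[of d v]] by simp
    also have "\<dots> = (\<Sum>e\<in>EG. B (S d v) (rG e) * B (S (rZ d) u) e)"
      by (simp add: B_sum_right[OF finEG])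
    also have "\<dots> = (\<Sum>e\<in>EG. B (Q (br v (rG e))) d * B (Q (br u e)) (rZ d))"
      by (rule sum.cong[OF refl]) (simp add: S_char EG_G)
    finally show "B (S (rZ d) u) (S d v) = (\<Sum>e\<in>EG. B (Q (br v (rG e))) d * B (Q (br u e)) (rZ d))" .
  qed
  also have "\<dots> = (\<Sum>e\<in>EG. \<Sum>d\<in>EZ. B (Q (br v (rG e))) d * B (Q (br u e)) (rZ d))"
    by (rule sum.swap)
  also have "\<dots> = (\<Sum>e\<in>EG. B (Q (br v (rG e))) (Q (br u e)))"
  proof (rule sum.cong[OF refl])
    fix e
    have "B (Q (br v (rG e))) (Q (br u e)) = B (Q (br v (rG e))) (\<Sum>d\<in>EZ. B (Q (br u e)) (rZ d) *\<^sub>R d)"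
      using expZ[OF Q_in[of "br u e"]] by simp
    also have "\<dots> = (\<Sum>d\<in>EZ. B (Q (br u e)) (rZ d) * B (Q (br v (rG e))) d)"
      by (simp add: B_sum_right[OF finEZ])
    finally show "(\<Sum>d\<in>EZ. B (Q (br v (rG e))) d * B (Q (br u e)) (rZ d)) = B (Q (br v (rG e))) (Q (br u e))"
      by (simp add: mult.commute)
  qed
  also have "\<dots> = (\<Sum>e\<in>EG. B (S (Q (br u e)) v) (rG e))"
    by (rule sum.cong[OF refl]) (simp add: S_char)
  also have "\<dots> = trace_on G (\<lambda>w. S (Q (br u w)) v)"
    by (rule trG[symmetric]) simp
  finally show ?thesis .
qed

lemma A3_zero: "trace_on G (\<lambda>w. Lg w c) = 0"
proof -
  define \<beta>1 where "\<beta>1 a b = B (P (br b a)) c" for a b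
  have bil1: "bilinear \<beta>1" unfolding \<beta>1_def by (rule bilinI) (simp_all add: algebra_simps)
  have anti1: "\<beta>1 a b = - \<beta>1 b a" for a b unfolding \<beta>1_def by (simp add: br_anti[of a b])
  define \<beta>2 where "\<beta>2 a b = B (P (br a c)) b" for a b
  have bil2: "bilinear \<beta>2" unfolding \<beta>2_def by (rule bilinI) (simp_all add: algebra_simps)
  have t0: "(\<Sum>e\<in>EG. B (P (br e c)) (rG e)) = 0"
  proof -
    have "(\<Sum>e\<in>EG. B (P (br e c)) (rG e)) = trace_on G (\<lambda>w. P (br w c))"
      by (rule trG[symmetric]) simp
    also have "\<dots> = 0" by (rule trace_adg_zero)
    finally show ?thesis .
  qed
  have "trace_on G (\<lambda>w. Lg w c) = (\<Sum>e\<in>EG. B (Lg e c) (rG e))"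
    by (rule trG) simp
  also have "\<dots> = (\<Sum>e\<in>EG. 1/2 * (B (P (br e c)) (rG e) + \<beta>1 e (rG e) + \<beta>2 (rG e) e))"
    by (rule sum.cong[OF refl]) (simp add: Lg_char \<beta>1_def \<beta>2_def)
  also have "\<dots> = 1/2 * ((\<Sum>e\<in>EG. B (P (br e c)) (rG e)) + (\<Sum>e\<in>EG. \<beta>1 e (rG e)) + (\<Sum>e\<in>EG. \<beta>2 (rG e) e))"
    by (simp only: sum.distrib[symmetric] sum_distrib_left)
  also have "(\<Sum>e\<in>EG. \<beta>1 e (rG e)) = 0" by (rule antisymG[OF bil1 anti1])
  also have "(\<Sum>e\<in>EG. \<beta>2 (rG e) e) = (\<Sum>e\<in>EG. \<beta>2 e (rG e))" by (rule symG[OF bil2, symmetric])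
  also have "\<dots> = (\<Sum>e\<in>EG. B (P (br e c)) (rG e))"
    by (rule sum.cong[OF refl]) (simp add: \<beta>2_def)
  finally show ?thesis using t0 by simp
qed

lemma A2_eq: "trace_on G (\<lambda>w. Lg u (S x w))
   = trace_on G (\<lambda>w. S x (P (br u w))) - 1/2 * trace_on G (\<lambda>w. J u (S x w))"
proof -
  define A1 where "A1 = trace_on G (\<lambda>w. S x (P (br u w)))"
  define Tg where "Tg = trace_on G (\<lambda>w. J u (S x w))"
  have i: "(\<Sum>e\<in>EG. B (P (br u (S x e))) (rG e)) = A1"
  proof -
    have "(\<Sum>e\<in>EG. B (P (br u (S x e))) (rG e)) = trace_on G (\<lambda>w. P (br u (S x w)))"
      by (rule trG[symmetric]) simp
    also have "\<dots> = A1" unfolding A1_def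
      by (rule cycG[where A="\<lambda>w. P (br u w)" and C="\<lambda>w. S x w"]) (auto intro: linearI)
    finally show ?thesis .
  qed
  define \<beta> where "\<beta> a b = B (Q (br a (P (br b u)))) x" for a b
  have bil: "bilinear \<beta>" unfolding \<beta>_def by (rule bilinI) (simp_all add: algebra_simps)
  have ii: "(\<Sum>e\<in>EG. B (P (br (rG e) u)) (S x e)) = A1"
  proof -
    have "(\<Sum>e\<in>EG. B (P (br (rG e) u)) (S x e)) = (\<Sum>e\<in>EG. \<beta> e (rG e))"
      by (rule sum.cong[OF refl]) (simp add: \<beta>_def B_sym[of "P _"] S_char)
    also have "\<dots> = (\<Sum>e\<in>EG. \<beta> (rG e) e)" by (rule symG[OF bil])
    also have "\<dots> = (\<Sum>e\<in>EG. B (S x (P (br u e))) (rG e))"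
    proof (rule sum.cong[OF refl])
      fix e
      have "br (P (br u e)) (rG e) = br (rG e) (P (br e u))"
        using br_anti[of "rG e" "P (br u e)"] br_anti[of e u] by simp
      then show "\<beta> (rG e) e = B (S x (P (br u e))) (rG e)" by (simp add: \<beta>_def S_char)
    qed
    also have "\<dots> = A1" unfolding A1_def by (rule trG[symmetric]) simp
    finally show ?thesis .
  qed
  have iii: "(\<Sum>e\<in>EG. B (P (br (rG e) (S x e))) u) = - Tg"
  proof -
    have "Tg = (\<Sum>e\<in>EG. B (J u (S x e)) (rG e))" unfolding Tg_def by (rule trG) simp
    also have "\<dots> = (\<Sum>e\<in>EG. - B (P (br (rG e) (S x e))) u)"
      by (rule sum.cong[OF refl]) (simp add: J_char br_anti[of "S x _"])
    finally show ?thesis by (simp add: sum_negf)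
  qed
  have "trace_on G (\<lambda>w. Lg u (S x w)) = (\<Sum>e\<in>EG. B (Lg u (S x e)) (rG e))"
    by (rule trG) simp
  also have "\<dots> = (\<Sum>e\<in>EG. 1/2 * (B (P (br u (S x e))) (rG e) + B (P (br (rG e) u)) (S x e)
      + B (P (br (rG e) (S x e))) u))"
    by (rule sum.cong[OF refl]) (simp add: Lg_char)
  also have "\<dots> = 1/2 * ((\<Sum>e\<in>EG. B (P (br u (S x e))) (rG e)) + (\<Sum>e\<in>EG. B (P (br (rG e) u)) (S x e))
      + (\<Sum>e\<in>EG. B (P (br (rG e) (S x e))) u))"
    by (simp only: sum.distrib[symmetric] sum_distrib_left)
  also have "\<dots> = A1 - 1/2 * Tg" by (simp add: i ii iii)
  finally show ?thesis by (simp add: A1_def Tg_def)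
qed

end

context LS begin

lemma Lh_add1[simp]: "Lh (a + b) c = Lh a c + Lh b c" by (simp add: Lh_def algebra_simps)
lemma Lh_add2[simp]: "Lh c (a + b) = Lh c a + Lh c b" by (simp add: Lh_def algebra_simps)
lemma Lh_scale1[simp]: "Lh (r *\<^sub>R a) c = r *\<^sub>R Lh a c" by (simp add: Lh_def algebra_simps)
lemma Lh_scale2[simp]: "Lh c (r *\<^sub>R a) = r *\<^sub>R Lh c a" by (simp add: Lh_def algebra_simps)
lemma Lh_lin1: "linear (\<lambda>x. Lh x u)" by (rule linearI) simp_all
lemma Lh_lin2: "linear (\<lambda>u. Lh x u)" by (rule linearI) simp_all
lemma Lh_diff1[simp]: "Lh (x - y) u = Lh x u - Lh y u" using linear_diff[OF Lh_lin1] .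
lemma Lh_diff2[simp]: "Lh x (u - v) = Lh x u - Lh x v" using linear_diff[OF Lh_lin2] .

lemma curv_lin: "linear (\<lambda>w. curv UNIV br B a w b)"
  unfolding curv_def LCU_eq by (rule linearI) (simp_all add: algebra_simps)

lemma c1: assumes "u \<in> G" "v \<in> G" "w \<in> G"
  shows "P (curv UNIV br B u w v) = curv G (brg br B) B u w v - (1/2) *\<^sub>R S (Q (br u w)) v
     + (1/4) *\<^sub>R S (Q (br w v)) u - (1/4) *\<^sub>R S (Q (br u v)) w"
proof -
  have [simp]: "P u = u" "P v = v" "P w = w" "Q u = 0" "Q v = 0" "Q w = 0"
    using assms by (simp_all add: P_G Q_G)
  show ?thesis unfolding curv_def LCU_eq LCG_eq[unfolded brg_eq] brg_eq
    by (simp add: Lh_def algebra_simps)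
qed

lemma c1z: assumes "u \<in> G" "v \<in> G" "z \<in> Z"
  shows "Q (curv UNIV br B u z v) = (1/4) *\<^sub>R Q (br u (S z v))"
proof -
  have [simp]: "P u = u" "P v = v" "P z = 0" "Q u = 0" "Q v = 0" "Q z = z" "br u z = 0" "br z u = 0"
    using assms by (simp_all add: P_G Q_G P_Z Q_Z Z_mem Z_mem2)
  show ?thesis unfolding curv_def LCU_eq
    by (simp add: Lh_def algebra_simps)
qed

lemma c2: assumes "x \<in> Z" "y \<in> Z" "w \<in> G"
  shows "P (curv UNIV br B x w y) = - (1/4) *\<^sub>R S x (S y w)"
proof -
  have [simp]: "P x = 0" "P y = 0" "P w = w" "Q x = x" "Q y = y" "Q w = 0" "br x w = 0"
    using assms by (simp_all add: P_G Q_G P_Z Q_Z Z_mem Z_mem2)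
  show ?thesis unfolding curv_def LCU_eq
    by (simp add: Lh_def algebra_simps)
qed

lemma c2z: assumes "x \<in> Z" "y \<in> Z" "z \<in> Z"
  shows "Q (curv UNIV br B x z y) = 0"
proof -
  have [simp]: "P x = 0" "P y = 0" "P z = 0" "Q x = x" "Q y = y" "Q z = z" "br x z = 0"
    using assms by (simp_all add: P_G Q_G P_Z Q_Z Z_mem Z_mem2)
  show ?thesis unfolding curv_def LCU_eq
    by (simp add: Lh_def algebra_simps)
qed

lemma c3: assumes "u \<in> G" "x \<in> Z" "w \<in> G"
  shows "P (curv UNIV br B u w x) = - (1/2) *\<^sub>R S x (P (br u w)) + (1/2) *\<^sub>R Lg u (S x w)
     - (1/2) *\<^sub>R Lg w (S x u)"
proof -
  have [simp]: "P u = u" "P x = 0" "P w = w" "Q u = 0" "Q x = x" "Q w = 0"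
    using assms by (simp_all add: P_G Q_G P_Z Q_Z)
  show ?thesis unfolding curv_def LCU_eq
    by (simp add: Lh_def algebra_simps)
qed

lemma c3z: assumes "u \<in> G" "x \<in> Z" "z \<in> Z"
  shows "Q (curv UNIV br B u z x) = 0"
proof -
  have [simp]: "P u = u" "P x = 0" "P z = 0" "Q u = 0" "Q x = x" "Q z = z" "br u z = 0"
    using assms by (simp_all add: P_G Q_G P_Z Q_Z Z_mem Z_mem2)
  show ?thesis unfolding curv_def LCU_eq
    by (simp add: Lh_def algebra_simps)
qed

end

context LS begin

lemma ostar_eq: "omega_star br B u x = S x u"
  using S_eq[of x u] by (simp add: S_op_def)

lemma case1: assumes u: "u \<in> G" and v: "v \<in> G"
  shows "ricci UNIV br B u v = ricci G (brg br B) B u v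
     - 1/2 * trace_on G (\<lambda>w. omega_star br B u (omega br B v w))"
proof -
  define T1 where "T1 = trace_on G (\<lambda>w. S (Q (br u w)) v)"
  have tgt: "trace_on G (\<lambda>w. omega_star br B u (omega br B v w)) = T1"
    by (simp add: ostar_eq omega_eq T1_def T_sym[of v u])
  have "trace_on G (\<lambda>w. P (curv UNIV br B u w v)) = trace_on G (\<lambda>w. curv G (brg br B) B u w v
      - (1/2) *\<^sub>R S (Q (br u w)) v + (1/4) *\<^sub>R S (Q (br w v)) u - (1/4) *\<^sub>R S (Q (br u v)) w)"
    by (rule trace_on_cong[OF sub_G]) (simp add: c1 u v)
  also have "\<dots> = ricci G (brg br B) B u v - 1/2 * T1
      + 1/4 * trace_on G (\<lambda>w. S (Q (br w v)) u) - 1/4 * trace_on G (\<lambda>w. S (Q (br u v)) w)"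
    by (simp only: trace_on_add trace_on_diff trace_on_scale ricci_def T1_def)
  also have "trace_on G (\<lambda>w. S (Q (br w v)) u) = trace_on G (\<lambda>w. (-1) *\<^sub>R S (Q (br v w)) u)"
    by (simp add: br_anti[of _ v])
  also have "\<dots> = - T1" by (simp only: trace_on_scale T1_def T_sym[of v u])
  also have "trace_on G (\<lambda>w. S (Q (br u v)) w) = 0" by (rule T_zero)
  finally have gpart: "trace_on G (\<lambda>w. P (curv UNIV br B u w v)) = ricci G (brg br B) B u v - 3/4 * T1"
    by simp
  have "trace_on Z (\<lambda>w. Q (curv UNIV br B u w v)) = trace_on Z (\<lambda>z. (1/4) *\<^sub>R Q (br u (S z v)))"
    by (rule trace_on_cong[OF sub_Z]) (simp add: c1z u v)
  also have "\<dots> = 1/4 * T1" by (simp only: trace_on_scale T_cross T1_def)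
  finally have zpart: "trace_on Z (\<lambda>w. Q (curv UNIV br B u w v)) = 1/4 * T1" .
  have "ricci UNIV br B u v = trace_on G (\<lambda>w. P (curv UNIV br B u w v)) + trace_on Z (\<lambda>w. Q (curv UNIV br B u w v))"
    unfolding ricci_def by (rule split_trace[OF curv_lin])
  then show ?thesis using gpart zpart tgt by simp
qed

lemma case2: assumes x: "x \<in> Z" and y: "y \<in> Z"
  shows "ricci UNIV br B x y = - 1/4 * trace_on G (\<lambda>w. S_op br B x (S_op br B y w))"
proof -
  have "trace_on G (\<lambda>w. P (curv UNIV br B x w y)) = trace_on G (\<lambda>w. (- (1/4)) *\<^sub>R S x (S y w))"
    by (rule trace_on_cong[OF sub_G]) (simp add: c2 x y)
  also have "\<dots> = - 1/4 * trace_on G (\<lambda>w. S_op br B x (S_op br B y w))"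
    by (simp only: trace_on_scale S_eq)
  finally have gpart: "trace_on G (\<lambda>w. P (curv UNIV br B x w y)) = - 1/4 * trace_on G (\<lambda>w. S_op br B x (S_op br B y w))" .
  have "trace_on Z (\<lambda>w. Q (curv UNIV br B x w y)) = trace_on Z (\<lambda>z. 0)"
    by (rule trace_on_cong[OF sub_Z]) (simp add: c2z x y)
  then have zpart: "trace_on Z (\<lambda>w. Q (curv UNIV br B x w y)) = 0" by (simp add: trace_on_zero)
  have "ricci UNIV br B x y = trace_on G (\<lambda>w. P (curv UNIV br B x w y)) + trace_on Z (\<lambda>w. Q (curv UNIV br B x w y))"
    unfolding ricci_def by (rule split_trace[OF curv_lin])
  then show ?thesis using gpart zpart by simp
qed

lemma case3: assumes u: "u \<in> G" and x: "x \<in> Z"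
  shows "ricci UNIV br B u x = - 1/4 * trace_on G (\<lambda>w. J_op br B u (S_op br B x w))"
proof -
  define A1 where "A1 = trace_on G (\<lambda>w. S x (P (br u w)))"
  define Tg where "Tg = trace_on G (\<lambda>w. J u (S x w))"
  have "trace_on G (\<lambda>w. P (curv UNIV br B u w x)) = trace_on G (\<lambda>w. - (1/2) *\<^sub>R S x (P (br u w))
      + (1/2) *\<^sub>R Lg u (S x w) - (1/2) *\<^sub>R Lg w (S x u))"
    by (rule trace_on_cong[OF sub_G]) (simp add: c3 u x)
  also have "\<dots> = - (1/2) * A1 + 1/2 * trace_on G (\<lambda>w. Lg u (S x w))
      - 1/2 * trace_on G (\<lambda>w. Lg w (S x u))"
    by (simp only: trace_on_add trace_on_diff trace_on_scale A1_def)
  also have "trace_on G (\<lambda>w. Lg u (S x w)) = A1 - 1/2 * Tg"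
    unfolding A1_def Tg_def by (rule A2_eq)
  also have "trace_on G (\<lambda>w. Lg w (S x u)) = 0" by (rule A3_zero)
  finally have gpart: "trace_on G (\<lambda>w. P (curv UNIV br B u w x)) = - 1/4 * Tg" by argo
  have "trace_on Z (\<lambda>w. Q (curv UNIV br B u w x)) = trace_on Z (\<lambda>z. 0)"
    by (rule trace_on_cong[OF sub_Z]) (simp add: c3z u x)
  then have zpart: "trace_on Z (\<lambda>w. Q (curv UNIV br B u w x)) = 0" by (simp add: trace_on_zero)
  have "ricci UNIV br B u x = trace_on G (\<lambda>w. P (curv UNIV br B u w x)) + trace_on Z (\<lambda>w. Q (curv UNIV br B u w x))"
    unfolding ricci_def by (rule split_trace[OF curv_lin])
  then show ?thesis using gpart zpart by (simp add: Tg_def J_eq S_eq)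
qed

end

theorem proposition3p2:
  fixes br :: "'a::euclidean_space \<Rightarrow> 'a \<Rightarrow> 'a" and B :: "'a \<Rightarrow> 'a \<Rightarrow> real"
  assumes lie: "lie_algebra br"
    and nilp: "nilpotent_lie br"
    and lor: "lorentzian B"
    and Z_nondeg: "\<forall>x\<in>center br. (\<forall>y\<in>center br. B x y = 0) \<longrightarrow> x = 0"
    and Z_posdef: "\<forall>x\<in>center br. x \<noteq> 0 \<longrightarrow> B x x > 0"
  shows "(\<forall>u\<in>gpart br B. \<forall>v\<in>gpart br B.
            ricci UNIV br B u v =
              ricci (gpart br B) (brg br B) B u v
              - 1/2 * trace_on (gpart br B) (\<lambda>w. omega_star br B u (omega br B v w)))
       \<and> (\<forall>x\<in>center br. \<forall>y\<in>center br.
            ricci UNIV br B x y =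
              - 1/4 * trace_on (gpart br B) (\<lambda>w. S_op br B x (S_op br B y w)))
       \<and> (\<forall>u\<in>gpart br B. \<forall>x\<in>center br.
            ricci UNIV br B u x =
              - 1/4 * trace_on (gpart br B) (\<lambda>w. J_op br B u (S_op br B x w)))"
proof -
  interpret LS br B using lie nilp lor Z_posdef by unfold_locales
  show ?thesis using case1 case2 case3 by blast
qed

end
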